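(* Let $G=(V,E)$ be a finite simple graph. A measurement schedule on $|G\rangle$ is optimal if it is given by a path decomposition of $G$ of minimal width; in particular, $\operatorname{sc}(|G\rangle)=\operatorname{pw}(G)+1$.
   Context: The graph state of $G$ is $|G\rangle=\left(\prod_{e\in E} CZ_e\right)|+\rangle^{\otimes V}$, with one qubit per vertex. A measurement schedule on $|G\rangle$ is represented by a sequence $(X_i)_{i=1}^n$ of subsets of $V$, where $X_i$ is the set of active qubits (initialised but not yet measured) at step $i$, satisfying: (M1) each qubit is initialised exactly once (every $v\in V$ lies in some $X_i$, and the indices $i$ with $v\in X_i$ form a contiguous block, after which $v$ is measured); (M2) a qubit is measured only after all its neighbours have been initialised (if $j$ is the last index with $v\in X_j$, every neighbour of $v$ lies in some $X_i$ with $i\le j$). The cost of a measurement schedule is $\max_i |X_i|$; the spatial cost $\operatorname{sc}(|G\rangle)$ is the minimum cost over all measurement schedules on $|G\rangle$, and a schedule is optimal if its cost equals the spatial cost. A path decomposition of $G$ is a sequence $(X_i)_{i=1}^n$ of subsets of $V$ such that (P1) every vertex lies in some $X_i$, (P2) every edge is contained in some $X_i$, (P3) for $i\le j\le k$, $v\in X_i\cap X_k$ implies $v\in X_j$. Its width is $\max_i|X_i|-1$, and the pathwidth $\operatorname{pw}(G)$ is the minimum width over all path decompositions of $G$. *)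

theory Defs
  imports Main
begin

definition simple_graph :: "'a set \<Rightarrow> 'a set set \<Rightarrow> bool" where
  "simple_graph V E \<longleftrightarrow> finite V \<and> (\<forall>e\<in>E. e \<subseteq> V \<and> card e = 2)"

definition is_path_decomposition :: "'a set \<Rightarrow> 'a set set \<Rightarrow> 'a set list \<Rightarrow> bool" where
  "is_path_decomposition V E Xs \<longleftrightarrow>
     (\<forall>i<length Xs. Xs ! i \<subseteq> V) \<and>
     (\<forall>v\<in>V. \<exists>i<length Xs. v \<in> Xs ! i) \<and>
     (\<forall>e\<in>E. \<exists>i<length Xs. e \<subseteq> Xs ! i) \<and>
     (\<forall>i j k v. i \<le> j \<and> j \<le> k \<and> k < length Xs \<and> v \<in> Xs ! i \<and> v \<in> Xs ! k \<longrightarrow> v \<in> Xs ! j)"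

definition max_bag :: "'a set list \<Rightarrow> nat" where
  "max_bag Xs = Max (insert 0 (card ` set Xs))"

definition pd_width :: "'a set list \<Rightarrow> int" where
  "pd_width Xs = int (max_bag Xs) - 1"

definition pathwidth :: "'a set \<Rightarrow> 'a set set \<Rightarrow> int" where
  "pathwidth V E = Min (pd_width ` {Xs. is_path_decomposition V E Xs})"

definition is_measurement_schedule :: "'a set \<Rightarrow> 'a set set \<Rightarrow> 'a set list \<Rightarrow> bool" where
  "is_measurement_schedule V E Xs \<longleftrightarrow>
     (\<forall>i<length Xs. Xs ! i \<subseteq> V) \<and>
     \<comment> \<open>(M1) every qubit initialised, active indices contiguous\<close>
     (\<forall>v\<in>V. \<exists>i<length Xs. v \<in> Xs ! i) \<and>
     (\<forall>i j k v. i \<le> j \<and> j \<le> k \<and> k < length Xs \<and> v \<in> Xs ! i \<and> v \<in> Xs ! k \<longrightarrow> v \<in> Xs ! j) \<and>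
     \<comment> \<open>(M2) at the last active index j of v, all neighbours initialised\<close>
     (\<forall>v j. j < length Xs \<and> v \<in> Xs ! j \<and> (\<forall>k. j < k \<and> k < length Xs \<longrightarrow> v \<notin> Xs ! k) \<longrightarrow>
        (\<forall>u. {u, v} \<in> E \<longrightarrow> (\<exists>i\<le>j. u \<in> Xs ! i)))"

definition schedule_cost :: "'a set list \<Rightarrow> nat" where
  "schedule_cost Xs = max_bag Xs"

definition spatial_cost :: "'a set \<Rightarrow> 'a set set \<Rightarrow> nat" where
  "spatial_cost V E = Min (schedule_cost ` {Xs. is_measurement_schedule V E Xs})"

definition optimal_schedule :: "'a set \<Rightarrow> 'a set set \<Rightarrow> 'a set list \<Rightarrow> bool" where
  "optimal_schedule V E Xs \<longleftrightarrow> is_measurement_schedule V E Xs \<and> schedule_cost Xs = spatial_cost V E"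

end

theory Submission
  imports Defs
begin

lemma pd_imp_ms:
  assumes "simple_graph V E" "is_path_decomposition V E Xs"
  shows "is_measurement_schedule V E Xs"
proof -
  note pd = assms(2)[unfolded is_path_decomposition_def]
  note sub = pd[THEN conjunct1]
  note cov = pd[THEN conjunct2, THEN conjunct1]
  note eds = pd[THEN conjunct2, THEN conjunct2, THEN conjunct1]
  note con = pd[THEN conjunct2, THEN conjunct2, THEN conjunct2]
  have m2: "\<forall>v j. j < length Xs \<and> v \<in> Xs ! j \<and> (\<forall>k. j < k \<and> k < length Xs \<longrightarrow> v \<notin> Xs ! k) \<longrightarrow>
        (\<forall>u. {u, v} \<in> E \<longrightarrow> (\<exists>i\<le>j. u \<in> Xs ! i))"
  proof (intro allI impI)
    fix v j u
    assume h: "j < length Xs \<and> v \<in> Xs ! j \<and> (\<forall>k. j < k \<and> k < length Xs \<longrightarrow> v \<notin> Xs ! k)"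
      and e: "{u, v} \<in> E"
    obtain i where i: "i < length Xs" "{u,v} \<subseteq> Xs ! i"
      using eds e by blast
    have "i \<le> j"
    proof (rule ccontr)
      assume "\<not> i \<le> j"
      then have "v \<notin> Xs ! i" using h i(1) by simp
      then show False using i(2) by simp
    qed
    then show "\<exists>i\<le>j. u \<in> Xs ! i" using i by blast
  qed
  show ?thesis by (unfold is_measurement_schedule_def) (intro conjI sub cov con m2)
qed

lemma ms_imp_pd:
  assumes "simple_graph V E" "is_measurement_schedule V E Xs"
  shows "is_path_decomposition V E Xs"
proof -
  note ms = assms(2)[unfolded is_measurement_schedule_def]
  note sub = ms[THEN conjunct1]
  note cov = ms[THEN conjunct2, THEN conjunct1]
  note con = ms[THEN conjunct2, THEN conjunct2, THEN conjunct1]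
  note m2 = ms[THEN conjunct2, THEN conjunct2, THEN conjunct2]
  have last: "\<exists>j<length Xs. v \<in> Xs ! j \<and> (\<forall>k. j < k \<and> k < length Xs \<longrightarrow> v \<notin> Xs ! k)"
    if "v \<in> V" for v
  proof -
    let ?S = "{j. j < length Xs \<and> v \<in> Xs ! j}"
    have ne: "?S \<noteq> {}" using cov that by blast
    have fin: "finite ?S" by simp
    have m: "Max ?S \<in> ?S" by (rule Max_in[OF fin ne])
    have "\<forall>k. Max ?S < k \<and> k < length Xs \<longrightarrow> v \<notin> Xs ! k"
    proof (intro allI impI notI)
      fix k assume k: "Max ?S < k \<and> k < length Xs" "v \<in> Xs ! k"
      then have "k \<in> ?S" by simp
      then have kl: "k \<le> Max ?S" by (rule Max_ge[OF fin])
      have mk: "Max ?S < k" using k(1) by (rule conjunct1)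
      show False using leD[OF kl] mk by (rule notE)
    qed
    then show ?thesis using m by blast
  qed
  have edge: "\<exists>i<length Xs. e \<subseteq> Xs ! i" if "e \<in> E" for e
  proof -
    have eV: "e \<subseteq> V" and c2: "card e = 2" using assms(1) that unfolding simple_graph_def by auto
    from card_2_iff[THEN iffD1, OF c2] obtain u v where euv: "e = {u,v}" by blast
    have uv: "e = {u,v}" "u \<in> V" "v \<in> V" using euv eV by auto
    have key: "\<exists>i<length Xs. e \<subseteq> Xs ! i"
      if ab: "e = {a,b}" "a \<in> V" "b \<in> V"
        and ja: "ja < length Xs" "a \<in> Xs ! ja" "\<forall>k. ja < k \<and> k < length Xs \<longrightarrow> a \<notin> Xs ! k"
        and jb: "jb < length Xs" "b \<in> Xs ! jb" "\<forall>k. jb < k \<and> k < length Xs \<longrightarrow> b \<notin> Xs ! k"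
        and le: "ja \<le> jb" for a b ja jb
    proof -
      have "{b, a} \<in> E" using ab \<open>e \<in> E\<close> by (simp add: insert_commute)
      then obtain i where "i \<le> ja" "b \<in> Xs ! i" using m2[rule_format, OF conjI[OF ja(1) conjI[OF ja(2) ja(3)]]] by blast
      then have "b \<in> Xs ! ja" using con[rule_format, of i ja jb b] jb le by simp
      then show ?thesis using ab ja by auto
    qed
    obtain ju where ju: "ju < length Xs" "u \<in> Xs ! ju" "\<forall>k. ju < k \<and> k < length Xs \<longrightarrow> u \<notin> Xs ! k"
      using last[OF uv(2)] by blast
    obtain jv where jv: "jv < length Xs" "v \<in> Xs ! jv" "\<forall>k. jv < k \<and> k < length Xs \<longrightarrow> v \<notin> Xs ! k"
      using last[OF uv(3)] by blast
    show ?thesis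
    proof (cases "ju \<le> jv")
      case True
      then show ?thesis using key[OF uv ju jv] by blast
    next
      case False
      have "e = {v,u}" using uv by auto
      then show ?thesis using key[OF _ uv(3) uv(2) jv ju] False by simp
    qed
  qed
  have eds: "\<forall>e\<in>E. \<exists>i<length Xs. e \<subseteq> Xs ! i" using edge by blast
  show ?thesis by (unfold is_path_decomposition_def) (intro conjI sub cov eds con)
qed

lemma sets_eq:
  assumes "simple_graph V E"
  shows "{Xs. is_measurement_schedule V E Xs} = {Xs. is_path_decomposition V E Xs}"
  by (rule Collect_cong, rule iffI) (erule ms_imp_pd[OF assms], erule pd_imp_ms[OF assms])

lemma max_bag_le:
  assumes "simple_graph V E" "is_path_decomposition V E Xs"
  shows "max_bag Xs \<le> card V"
proof -
  have fin: "finite V" using assms(1) unfolding simple_graph_def by simp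
  have "\<forall>X\<in>set Xs. card X \<le> card V"
    using assms(2) fin unfolding is_path_decomposition_def
    by (metis card_mono in_set_conv_nth)
  then show ?thesis unfolding max_bag_def by simp
qed

theorem corollary1:
  fixes V :: "'a set" and E :: "'a set set"
  assumes "simple_graph V E"
  shows "(\<forall>Xs. is_path_decomposition V E Xs \<and> pd_width Xs = pathwidth V E
              \<longrightarrow> optimal_schedule V E Xs)
         \<and> int (spatial_cost V E) = pathwidth V E + 1"
proof -
  let ?S = "{Xs. is_path_decomposition V E Xs}"
  let ?A = "max_bag ` ?S"
  have "is_path_decomposition V E [V]"
    using assms unfolding is_path_decomposition_def simple_graph_def by auto
  then have ne: "?A \<noteq> {}" by blast
  have fin: "finite ?A"
    by (rule finite_subset[of _ "{0..card V}"]) (use max_bag_le assms in auto)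
  have sc: "spatial_cost V E = Min ?A"
    unfolding spatial_cost_def schedule_cost_def sets_eq[OF assms] ..
  have "pd_width ` ?S = (\<lambda>n. int n - 1) ` ?A"
    unfolding pd_width_def image_image ..
  then have pw: "pathwidth V E = int (Min ?A) - 1"
    unfolding pathwidth_def
    by (simp add: mono_Min_commute[OF _ fin ne, of "\<lambda>n. int n - 1"] mono_def)
  show ?thesis
  proof (intro conjI allI impI)
    show "int (spatial_cost V E) = pathwidth V E + 1" using sc pw by simp
  next
    fix Xs assume h: "is_path_decomposition V E Xs \<and> pd_width Xs = pathwidth V E"
    then show "optimal_schedule V E Xs"
      unfolding optimal_schedule_def schedule_cost_def
      using pd_imp_ms[OF assms] sc pw by (simp add: pd_width_def)
  qed
qed

end
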